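(* Consider a Moksha-Patam board with a chute-barrier of $\lambda\ge 6$ chutes whose entrances are the cells $M+1,M+2,\dots,M+\lambda$. Set $m_1=M+1$ and let $m_2$ be the lowest exit among the chutes of this chute-barrier. Inductively, for $i\ge 2$, let $m_{i+1}$ be the lowest exit among the chutes whose entrance lies in $\{m_i+1,m_i+2,\dots,m_{i-1}-1\}$, or $m_{i+1}=m_i$ if there is no such chute or if this lowest exit exceeds $m_i$. Let $m=\min\{m_i: i\in\mathbb N\}$ and $C=\{m,m+1,\dots,M\}$. Then $C$ is not closed if and only if there is a ladder whose entrance $\ell$ lies in $C$ and whose exit $L$ satisfies $L>M+\lambda$.
   Context: A Moksha-Patam board consists of the cells $1,\dots,100$ together with a finite set of components; a component is an ordered pair $(a,b)$ of distinct cells, $a$ being its entrance and $b$ its exit; it is a ladder if $a<b$ and a chute if $a>b$. Conventions: distinct components have distinct entrances; no cell is both an entrance and an exit; cells $1$ and $100$ are neither entrances nor exits (components may share exits). The associated Markov chain has state space $\{1,\dots,100\}$ and transition probabilities defined as follows: $p_{100,100}=1$; for $i<100$ and each die value $d\in\{1,\dots,6\}$ (each with probability $1/6$), if $i+d>100$ the chain stays at $i$; otherwise, with $j=i+d$, the chain moves to $b$ if $j$ is the entrance of a component $(j,b)$ and to $j$ otherwise. A set $C$ of states is closed if $p_{ij}=0$ for all $i\in C$, $j\notin C$. A chute-barrier is a collection of six or more chutes whose entrances are consecutive cells. *)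

theory Defs
  imports Main "HOL-Library.Extended_Nat"
begin

text \<open>A board is given by its set of components (entrance, exit), cells are 1..100.\<close>

definition cells :: "nat set" where
  "cells = {1..100}"

definition valid_board :: "(nat \<times> nat) set \<Rightarrow> bool" where
  "valid_board comps \<longleftrightarrow>
     finite comps \<and>
     (\<forall>(a,b)\<in>comps. a \<noteq> b \<and> a \<in> cells \<and> b \<in> cells) \<and>
     (\<forall>(a,b)\<in>comps. \<forall>(a',b')\<in>comps. a = a' \<longrightarrow> b = b') \<and>
     fst ` comps \<inter> snd ` comps = {} \<and>
     1 \<notin> fst ` comps \<union> snd ` comps \<and>
     100 \<notin> fst ` comps \<union> snd ` comps"

definition is_ladder :: "nat \<times> nat \<Rightarrow> bool" where
  "is_ladder c \<longleftrightarrow> fst c < snd c"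

definition is_chute :: "nat \<times> nat \<Rightarrow> bool" where
  "is_chute c \<longleftrightarrow> fst c > snd c"

definition land :: "(nat \<times> nat) set \<Rightarrow> nat \<Rightarrow> nat" where
  "land comps j = (if \<exists>b. (j,b) \<in> comps then (THE b. (j,b) \<in> comps) else j)"

definition move :: "(nat \<times> nat) set \<Rightarrow> nat \<Rightarrow> nat \<Rightarrow> nat" where
  "move comps i d = (if i + d > 100 then i else land comps (i + d))"

definition trans_prob :: "(nat \<times> nat) set \<Rightarrow> nat \<Rightarrow> nat \<Rightarrow> real" where
  "trans_prob comps i j =
     (if i = 100 then (if j = 100 then 1 else 0)
      else real (card {d \<in> {1..6::nat}. move comps i d = j}) / 6)"

definition closed_set :: "(nat \<times> nat) set \<Rightarrow> nat set \<Rightarrow> bool" where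
  "closed_set comps C \<longleftrightarrow>
     (\<forall>i\<in>C. \<forall>j\<in>cells - C. trans_prob comps i j = 0)"

text \<open>Lowest exit among chutes with entrance strictly between lo and hi; the step of the
  recursion for m_(i+1) from m_i (= cur) and m_(i-1) (= prev).\<close>
definition mstep :: "(nat \<times> nat) set \<Rightarrow> nat \<Rightarrow> nat \<Rightarrow> nat" where
  "mstep comps cur prev =
     (let S = {b. \<exists>a. (a,b) \<in> comps \<and> is_chute (a,b) \<and> cur < a \<and> a < prev}
      in if S = {} \<or> Min S > cur then cur else Min S)"

text \<open>mseq comps M lam n = m_(n+1).\<close>
fun mseq :: "(nat \<times> nat) set \<Rightarrow> nat \<Rightarrow> nat \<Rightarrow> nat \<Rightarrow> nat" where
  "mseq comps M lam 0 = M + 1"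
| "mseq comps M lam (Suc 0) =
     Min {b. \<exists>a. (a,b) \<in> comps \<and> is_chute (a,b) \<and> a \<in> {M+1..M+lam}}"
| "mseq comps M lam (Suc (Suc n)) =
     mstep comps (mseq comps M lam (Suc n)) (mseq comps M lam n)"

end

theory Submission
  imports Defs
begin

lemma vb_facts:
  assumes "valid_board comps"
  shows "finite comps"
    and "\<And>a b. (a,b)\<in>comps \<Longrightarrow> a \<noteq> b \<and> a \<in> cells \<and> b \<in> cells"
    and "\<And>a b b'. (a,b)\<in>comps \<Longrightarrow> (a,b')\<in>comps \<Longrightarrow> b = b'"
    and "\<And>a b a' b'. (a,b)\<in>comps \<Longrightarrow> (a',b')\<in>comps \<Longrightarrow> a \<noteq> b'"
proof -
  note v = assms[unfolded valid_board_def]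
  have c1: "finite comps" using v by (elim conjE)
  have c2: "\<forall>(a,b)\<in>comps. a \<noteq> b \<and> a \<in> cells \<and> b \<in> cells" using v by (elim conjE)
  have c3: "\<forall>(a,b)\<in>comps. \<forall>(a',b')\<in>comps. a = a' \<longrightarrow> b = b'" using v by (elim conjE)
  have c4: "fst ` comps \<inter> snd ` comps = {}" using v by (elim conjE)
  show "finite comps" by (rule c1)
  show "\<And>a b. (a,b)\<in>comps \<Longrightarrow> a \<noteq> b \<and> a \<in> cells \<and> b \<in> cells"
  proof -
    fix a b assume h: "(a,b)\<in>comps"
    show "a \<noteq> b \<and> a \<in> cells \<and> b \<in> cells" using bspec[OF c2 h] by simp
  qed
  show "\<And>a b b'. (a,b)\<in>comps \<Longrightarrow> (a,b')\<in>comps \<Longrightarrow> b = b'"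
  proof -
    fix a b b' assume h: "(a,b)\<in>comps" "(a,b')\<in>comps"
    have "\<forall>(a',b'')\<in>comps. a = a' \<longrightarrow> b = b''" using bspec[OF c3 h(1)] by simp
    from bspec[OF this h(2)] show "b = b'" by simp
  qed
  show "\<And>a b a' b'. (a,b)\<in>comps \<Longrightarrow> (a',b')\<in>comps \<Longrightarrow> a \<noteq> b'"
  proof
    fix a b a' b' assume h: "(a,b)\<in>comps" "(a',b')\<in>comps" "a = b'"
    have "a \<in> fst ` comps" using h(1) by (metis fst_conv image_eqI)
    moreover have "a \<in> snd ` comps" using h(2,3) by (metis snd_conv image_eqI)
    ultimately show False using c4 by blast
  qed
qed

lemma land_eq:
  assumes "valid_board comps" "(k,b) \<in> comps"
  shows "land comps k = b"
proof -
  have "(THE b. (k,b) \<in> comps) = b"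
    using assms vb_facts(3)[OF assms(1)] by (intro the_equality) auto
  thus ?thesis using assms unfolding land_def by auto
qed

lemma land_no: "\<not>(\<exists>b. (k,b)\<in>comps) \<Longrightarrow> land comps k = k"
  unfolding land_def by auto

lemma mstep_exit:
  assumes "valid_board comps" "cur \<in> snd ` comps"
  shows "mstep comps cur prev \<in> snd ` comps"
proof -
  let ?S = "{b. \<exists>a. (a,b) \<in> comps \<and> is_chute (a,b) \<and> cur < a \<and> a < prev}"
  have sub: "?S \<subseteq> snd ` comps" by force
  have fin: "finite ?S" using finite_subset[OF sub] vb_facts(1)[OF assms(1)] by auto
  show ?thesis unfolding mstep_def Let_def
    using assms(2) Min_in[OF fin] sub by auto
qed

lemma mstep_le:
  assumes "valid_board comps" "(a,b) \<in> comps" "is_chute (a,b)" "cur < a" "a < prev"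
  shows "mstep comps cur prev \<le> b"
proof -
  let ?S = "{b. \<exists>a. (a,b) \<in> comps \<and> is_chute (a,b) \<and> cur < a \<and> a < prev}"
  have sub: "?S \<subseteq> snd ` comps" by force
  have fin: "finite ?S" using finite_subset[OF sub] vb_facts(1)[OF assms(1)] by auto
  have bS: "b \<in> ?S" using assms by auto
  have "Min ?S \<le> b" using Min_le[OF fin bS] .
  thus ?thesis unfolding mstep_def Let_def using bS by auto
qed

lemma mseq1_le:
  assumes "valid_board comps" "(a,b) \<in> comps" "is_chute (a,b)" "a \<in> {M+1..M+lam}"
  shows "mseq comps M lam (Suc 0) \<le> b"
proof -
  let ?S = "{b. \<exists>a. (a,b) \<in> comps \<and> is_chute (a,b) \<and> a \<in> {M+1..M+lam}}"
  have sub: "?S \<subseteq> snd ` comps" by force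
  have fin: "finite ?S" using finite_subset[OF sub] vb_facts(1)[OF assms(1)] by auto
  have bS: "b \<in> ?S" using assms by auto
  show ?thesis using Min_le[OF fin bS] by simp
qed

lemma mseq1_exit:
  assumes "valid_board comps" "(M+1,b) \<in> comps" "is_chute (M+1,b)" "lam \<ge> 1"
  shows "mseq comps M lam (Suc 0) \<in> snd ` comps"
proof -
  let ?S = "{b. \<exists>a. (a,b) \<in> comps \<and> is_chute (a,b) \<and> a \<in> {M+1..M+lam}}"
  have sub: "?S \<subseteq> snd ` comps" by force
  have fin: "finite ?S" using finite_subset[OF sub] vb_facts(1)[OF assms(1)] by auto
  have bS: "b \<in> ?S" using assms by auto
  show ?thesis using Min_in[OF fin] bS sub by auto
qed

lemma mseq_exit:
  assumes "valid_board comps" "(M+1,b) \<in> comps" "is_chute (M+1,b)" "lam \<ge> 1"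
  shows "mseq comps M lam (Suc n) \<in> snd ` comps"
proof -
  have "mseq comps M lam (Suc n) \<in> snd ` comps \<and> mseq comps M lam (Suc (Suc n)) \<in> snd ` comps"
  proof (induction n)
    case 0
    have "mseq comps M lam (Suc 0) \<in> snd ` comps" using mseq1_exit[OF assms] .
    then show ?case using mstep_exit[OF assms(1)] by simp
  next
    case (Suc n)
    then show ?case using mstep_exit[OF assms(1)] by simp
  qed
  thus ?thesis by simp
qed

theorem mainTheorem8:
  fixes comps :: "(nat \<times> nat) set" and M lam :: nat
  assumes "valid_board comps"
    and "lam \<ge> 6"
    and "\<forall>k\<in>{1..lam}. \<exists>b. (M + k, b) \<in> comps \<and> is_chute (M + k, b)"
  shows "\<not> closed_set comps {(LEAST x. x \<in> range (mseq comps M lam))..M}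
     \<longleftrightarrow> (\<exists>l L. (l, L) \<in> comps \<and> is_ladder (l, L)
               \<and> l \<in> {(LEAST x. x \<in> range (mseq comps M lam))..M} \<and> L > M + lam)"
proof -
  note vb = vb_facts[OF assms(1)]
  define m where "m = (LEAST x. x \<in> range (mseq comps M lam))"
  have "m \<in> range (mseq comps M lam)" unfolding m_def by (rule LeastI[of _ "mseq comps M lam 0"]) (rule rangeI)
  then obtain j where j: "m = mseq comps M lam j" by auto
  have mle: "\<And>n. m \<le> mseq comps M lam n" unfolding m_def by (rule Least_le) auto
  obtain b1 where b1: "(M+1,b1) \<in> comps" "is_chute (M+1,b1)" using assms(3) assms(2) by force
  have lam1: "lam \<ge> 1" using assms(2) by simp
  have ex: "\<And>n. mseq comps M lam (Suc n) \<in> snd ` comps" using mseq_exit[OF assms(1) b1 lam1] .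
  have Mlam: "M + lam \<le> 100"
  proof -
    obtain b where "(M+lam,b) \<in> comps" using assms(3) lam1 by force
    thus ?thesis using vb(2) unfolding cells_def by force
  qed
  have barrier: "\<And>a. a \<in> {M+1..M+lam} \<Longrightarrow> \<exists>b. (a,b) \<in> comps \<and> is_chute (a,b)"
  proof -
    fix a assume "a \<in> {M+1..M+lam}"
    then have "a - M \<in> {1..lam}" "M + (a - M) = a" by auto
    thus "\<exists>b. (a,b) \<in> comps \<and> is_chute (a,b)" using bspec[OF assms(3), of "a - M"] by simp
  qed
  have chute_ok: "\<And>a b. (a,b) \<in> comps \<Longrightarrow> is_chute (a,b) \<Longrightarrow> m < a \<Longrightarrow> a \<le> M \<Longrightarrow> m \<le> b"
  proof -
    fix a b assume ab: "(a,b) \<in> comps" "is_chute (a,b)" "m < a" "a \<le> M"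
    have aent: "\<And>n. mseq comps M lam (Suc n) \<noteq> a" using ex ab(1) vb(4) by force
    define n' where "n' = (LEAST n. mseq comps M lam n < a)"
    have lt: "mseq comps M lam n' < a" unfolding n'_def by (rule LeastI[of _ j]) (use j ab in auto)
    have "n' \<noteq> 0"
    proof
      assume "n' = 0" then show False using lt ab(4) by simp
    qed
    then obtain p where p: "n' = Suc p" by (cases n') auto
    have "\<not> mseq comps M lam p < a"
      using not_less_Least[of p "\<lambda>n. mseq comps M lam n < a"] p unfolding n'_def by simp
    moreover have "mseq comps M lam p \<noteq> a" using aent ab(4) by (cases p) auto
    ultimately have gt: "a < mseq comps M lam p" by auto
    have "mseq comps M lam (Suc (Suc p)) \<le> b"
      using mstep_le[OF assms(1) ab(1,2)] lt gt p by simp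
    thus "m \<le> b" using mle[of "Suc (Suc p)"] by simp
  qed
  show ?thesis unfolding m_def[symmetric]
  proof
    assume "\<not> closed_set comps {m..M}"
    then obtain i k' where i: "i \<in> {m..M}" "k' \<in> cells - {m..M}" "trans_prob comps i k' \<noteq> 0"
      unfolding closed_set_def by auto
    have "i \<noteq> 100" using i Mlam lam1 by auto
    then have "card {d \<in> {1..6::nat}. move comps i d = k'} \<noteq> 0" using i(3) unfolding trans_prob_def by auto
    then have "{d \<in> {1..6::nat}. move comps i d = k'} \<noteq> {}" by (metis card.empty)
    then obtain d where d: "d \<in> {1..6}" "move comps i d = k'" by blast
    have nle: "\<not> i + d > 100"
    proof
      assume "i + d > 100" then have "k' = i" using d unfolding move_def by auto
      thus False using i by auto
    qed
    then have kl: "land comps (i+d) = k'" using d unfolding move_def by auto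
    show "\<exists>l L. (l, L) \<in> comps \<and> is_ladder (l, L) \<and> l \<in> {m..M} \<and> L > M + lam"
    proof (cases "i + d \<ge> M + 1")
      case True
      then have "i + d \<in> {M+1..M+lam}" using i d assms(2) by auto
      then obtain b where b: "(i+d,b) \<in> comps" "is_chute (i+d,b)" using barrier by blast
      have "k' = b" using land_eq[OF assms(1) b(1)] kl by simp
      moreover have "mseq comps M lam (Suc 0) \<le> b"
        using mseq1_le[OF assms(1) b] \<open>i + d \<in> {M+1..M+lam}\<close> by simp
      moreover have "b \<notin> {M+1..M+lam}" using barrier b(1) vb(4) by blast
      moreover have "b < M + lam" using b(2) \<open>i + d \<in> {M+1..M+lam}\<close> unfolding is_chute_def by auto
      ultimately have "k' \<in> {m..M}" using mle[of "Suc 0"] by auto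
      thus ?thesis using i by auto
    next
      case False
      show ?thesis
      proof (cases "\<exists>b. (i+d,b) \<in> comps")
        case False
        then have "k' = i + d" using kl land_no by metis
        thus ?thesis using i \<open>\<not> i + d \<ge> M + 1\<close> by auto
      next
        case True
        then obtain b where b: "(i+d,b) \<in> comps" by auto
        have kb: "k' = b" using land_eq[OF assms(1) b] kl by simp
        have "i + d \<noteq> b" using vb(2)[OF b] by auto
        then consider "b < i + d" | "b > i + d" by linarith
        then show ?thesis
        proof cases
          case 1
          then have "m \<le> b" using chute_ok[OF b] i d \<open>\<not> i + d \<ge> M + 1\<close> unfolding is_chute_def by auto
          then have "k' \<in> {m..M}" using kb 1 \<open>\<not> i + d \<ge> M + 1\<close> by auto
          thus ?thesis using i by auto
        next
          case 2
          have "b \<notin> {M+1..M+lam}" using barrier b vb(4) by blast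
          moreover have "b \<notin> {m..M}" using kb i by auto
          moreover have "m \<le> b" using 2 i by auto
          ultimately have "b > M + lam" by auto
          moreover have "i + d \<in> {m..M}" using i \<open>\<not> i + d \<ge> M + 1\<close> by auto
          ultimately show ?thesis using b \<open>b > i + d\<close> unfolding is_ladder_def
            by (intro exI[of _ "i+d"] exI[of _ b]) auto
        qed
      qed
    qed
  next
    assume "\<exists>l L. (l, L) \<in> comps \<and> is_ladder (l, L) \<and> l \<in> {m..M} \<and> L > M + lam"
    then obtain l L where lL: "(l, L) \<in> comps" "is_ladder (l, L)" "l \<in> {m..M}" "L > M + lam" by auto
    have "j \<noteq> 0"
    proof
      assume "j = 0" then have "m = M + 1" using j by simp
      then show False using lL(3) by simp
    qed
    then obtain q where "j = Suc q" by (cases j) auto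
    then have "m \<in> snd ` comps" using ex j by simp
    then have "l \<noteq> m" using lL(1) vb(4) by force
    then have l1: "l - 1 \<in> {m..M}" "Suc (l - 1) = l" using lL(3) by auto
    have L: "L \<in> cells" using vb(2)[OF lL(1)] by auto
    have "move comps (l-1) 1 = L" unfolding move_def using l1 lL land_eq[OF assms(1) lL(1)] Mlam by auto
    then have "1 \<in> {d \<in> {1..6::nat}. move comps (l-1) d = L}" by auto
    moreover have "finite {d \<in> {1..6::nat}. move comps (l-1) d = L}" by simp
    ultimately have "card {d \<in> {1..6::nat}. move comps (l-1) d = L} \<noteq> 0" using card_0_eq by blast
    moreover have "l - 1 \<noteq> 100" using l1 Mlam lam1 by auto
    ultimately have "trans_prob comps (l-1) L \<noteq> 0" unfolding trans_prob_def by auto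
    moreover have "L \<notin> {m..M}" using lL by auto
    ultimately show "\<not> closed_set comps {m..M}" unfolding closed_set_def using l1 L by blast
  qed
qed

end
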